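(* Assume (A1)–(A3), that $f$ is convex, and that $\theta^\star\in\mathbb R^d$ is a global minimizer of $f$; let $f^\star=f(\theta^\star)$. Let $(\theta_t)$ be generated by mini-batch SGD with batch sizes $b_t\in\mathbb N$ and learning rates $\eta_t\in[\eta_{\min},\eta_{\max}]\subset[0,\frac2{\bar L})$, and let $T\in\mathbb N$ with $\sum_{t=0}^{T-1}\eta_t\ne0$. Then $$\min_{t\in[0:T-1]}\mathbb E[f(\theta_t)-f^\star]\le\Big(\frac{\|\theta_0-\theta^\star\|^2}{2}+\frac{\eta_{\max}(f(\theta_0)-\underline f^\star)}{2-\bar L\eta_{\max}}\Big)\frac1{\sum_{t=0}^{T-1}\eta_t}+\frac{\sigma^2}{2}\Big(1+\frac{\bar L\eta_{\max}}{2-\bar L\eta_{\max}}\Big)\frac{\sum_{t=0}^{T-1}\eta_t^2b_t^{-1}}{\sum_{t=0}^{T-1}\eta_t}.$$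
   Context: Let $f_1,\dots,f_n:\mathbb R^d\to\mathbb R$, $f=\frac1n\sum_{i=1}^nf_i$. (A1) each $f_i$ is differentiable and $L_i$-smooth ($\|\nabla f_i(\theta_1)-\nabla f_i(\theta_2)\|\le L_i\|\theta_1-\theta_2\|$, $L_i>0$), and $f_i^\star:=\inf_\theta f_i(\theta)\in\mathbb R$. (A2) $\xi$ is a random variable independent of $\theta$, and the stochastic gradient $\nabla f_\xi$ satisfies $\mathbb E_\xi[\nabla f_\xi(\theta)]=\nabla f(\theta)$ and $\mathbb E_\xi\|\nabla f_\xi(\theta)-\nabla f(\theta)\|^2\le\sigma^2$ for all $\theta$, some $\sigma\ge0$. (A3) for batch size $b$, $(\xi_1,\dots,\xi_b)$ are i.i.d. copies of $\xi$ independent of $\theta$, and $\nabla f_B(\theta)=\frac1b\sum_{i=1}^b\nabla f_{\xi_i}(\theta)$. Mini-batch SGD: from $\theta_0\in\mathbb R^d$, at step $t$ draw $\xi_t=(\xi_{t,1},\dots,\xi_{t,b_t})$ as in (A3), independent of $\theta_t$ and of earlier draws, and set $\theta_{t+1}=\theta_t-\eta_t\frac1{b_t}\sum_{i=1}^{b_t}\nabla f_{\xi_{t,i}}(\theta_t)$. $\mathbb E$ is total expectation over $\xi_0,\xi_1,\dots$. $\bar L=\frac1n\sum_iL_i$, $\underline f^\star=\frac1n\sum_if_i^\star$, $[0:N]=\{0,\dots,N\}$. *)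

theory Defs
  imports "HOL-Probability.Probability"
begin

definition avg_fun :: "nat \<Rightarrow> (nat \<Rightarrow> 'a \<Rightarrow> real) \<Rightarrow> 'a \<Rightarrow> real" where
  "avg_fun n fs = (\<lambda>x. (\<Sum>i<n. fs i x) / real n)"

definition avg_inf :: "nat \<Rightarrow> (nat \<Rightarrow> 'a \<Rightarrow> real) \<Rightarrow> real" where
  "avg_inf n fs = (\<Sum>i<n. Inf (range (fs i))) / real n"

end

theory Submission
  imports Defs
begin

lemma line_deriv:
  fixes f :: "'a::euclidean_space \<Rightarrow> real"
  assumes grad: "\<And>x. (f has_derivative (\<lambda>h. g x \<bullet> h)) (at x)"
  shows "((\<lambda>s. f (x + s *\<^sub>R (y - x))) has_real_derivative (g (x + s *\<^sub>R (y - x)) \<bullet> (y - x))) (at s within A)"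
proof -
  have "((\<lambda>s. x + s *\<^sub>R (y - x)) has_derivative (\<lambda>h. h *\<^sub>R (y - x))) (at s within A)"
    by (auto intro!: derivative_eq_intros)
  from has_derivative_compose[OF this has_derivative_at_withinI[OF grad]]
  have "((\<lambda>s. f (x + s *\<^sub>R (y - x))) has_derivative (\<lambda>h. g (x + s *\<^sub>R (y - x)) \<bullet> (h *\<^sub>R (y - x)))) (at s within A)"
    by (simp add: o_def)
  then show ?thesis
    by (rule has_derivative_imp_has_field_derivative) (simp add: inner_scaleR_right mult.commute)
qed

lemma descent:
  fixes f :: "'a::euclidean_space \<Rightarrow> real"
  assumes grad: "\<And>x. (f has_derivative (\<lambda>h. g x \<bullet> h)) (at x)"
    and lip: "\<And>x y. norm (g x - g y) \<le> L * norm (x - y)"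
  shows "f y \<le> f x + g x \<bullet> (y - x) + L / 2 * (norm (y - x))\<^sup>2"
proof -
  define \<phi> where "\<phi> s = f (x + s *\<^sub>R (y - x)) - s * (g x \<bullet> (y - x)) - L / 2 * s\<^sup>2 * (norm (y - x))\<^sup>2" for s
  have "\<phi> 1 \<le> \<phi> 0"
  proof (rule DERIV_nonpos_imp_nonincreasing[of 0 1])
    fix s :: real assume s0: "0 \<le> s" and s1: "s \<le> 1"
    have s: "0 \<le> s \<and> s \<le> 1" using s0 s1 by simp
    have d: "(\<phi> has_real_derivative (g (x + s *\<^sub>R (y - x)) \<bullet> (y - x) - g x \<bullet> (y - x) - L * s * (norm (y - x))\<^sup>2)) (at s)"
      unfolding \<phi>_def
      by (rule line_deriv[OF grad, THEN DERIV_diff, THEN DERIV_diff]) (auto intro!: derivative_eq_intros)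
    have "g (x + s *\<^sub>R (y - x)) \<bullet> (y - x) - g x \<bullet> (y - x) = (g (x + s *\<^sub>R (y - x)) - g x) \<bullet> (y - x)"
      by (simp add: inner_diff_left)
    also have "\<dots> \<le> norm (g (x + s *\<^sub>R (y - x)) - g x) * norm (y - x)"
      by (rule norm_cauchy_schwarz)
    also have "\<dots> \<le> L * norm (s *\<^sub>R (y - x)) * norm (y - x)"
      using lip[of "x + s *\<^sub>R (y - x)" x] by (intro mult_right_mono) auto
    also have "\<dots> = L * s * (norm (y - x))\<^sup>2" using s by (simp add: power2_eq_square)
    finally show "\<exists>y. (\<phi> has_real_derivative y) (at s) \<and> y \<le> 0" using d by (intro exI[of _ _]) auto
  qed simp
  then show ?thesis by (simp add: \<phi>_def algebra_simps)
qed

lemma convex_tangent: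
  fixes f :: "'a::euclidean_space \<Rightarrow> real"
  assumes grad: "\<And>x. (f has_derivative (\<lambda>h. g x \<bullet> h)) (at x)"
    and cvx: "convex_on UNIV f"
  shows "f y \<ge> f x + g x \<bullet> (y - x)"
proof -
  define \<phi> where "\<phi> s = f (x + s *\<^sub>R (y - x))" for s :: real
  have c: "convex_on UNIV \<phi>"
  proof (rule convex_onI)
    fix t u :: real and a :: real assume t: "0 < t" "t < 1"
    have "x + ((1 - t) * u + t * a) *\<^sub>R (y - x) = (1 - t) *\<^sub>R (x + u *\<^sub>R (y - x)) + t *\<^sub>R (x + a *\<^sub>R (y - x))"
      by (simp add: algebra_simps)
    then show "\<phi> ((1 - t) *\<^sub>R u + t *\<^sub>R a) \<le> (1 - t) * \<phi> u + t * \<phi> a"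
      unfolding \<phi>_def using t convex_onD[OF cvx, of t "x + u *\<^sub>R (y - x)" "x + a *\<^sub>R (y - x)"] by simp
  qed simp
  have d: "(\<phi> has_real_derivative (g x \<bullet> (y - x))) (at 0 within UNIV)"
    unfolding \<phi>_def using line_deriv[OF grad, of x y 0 UNIV] by simp
  have "\<phi> 1 - \<phi> 0 \<ge> (g x \<bullet> (y - x)) * (1 - 0)"
    by (rule convex_on_imp_above_tangent[OF c]) (use d in auto)
  then show ?thesis by (simp add: \<phi>_def)
qed

lemma grad_zero_at_min:
  fixes f :: "'a::euclidean_space \<Rightarrow> real"
  assumes grad: "\<And>x. (f has_derivative (\<lambda>h. g x \<bullet> h)) (at x)"
    and lip: "\<And>x y. norm (g x - g y) \<le> L * norm (x - y)" and L: "L > 0"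
    and min: "\<And>x. f xs \<le> f x"
  shows "g xs = 0"
proof -
  let ?y = "xs - (1 / L) *\<^sub>R g xs"
  have nn: "norm (g xs) * norm (g xs) = g xs \<bullet> g xs" by (metis power2_eq_square power2_norm_eq_inner)
  have "f xs \<le> f ?y" by (rule min)
  also have "\<dots> \<le> f xs + g xs \<bullet> (?y - xs) + L / 2 * (norm (?y - xs))\<^sup>2"
    by (rule descent[OF grad lip])
  also have "\<dots> = f xs - (1 / (2 * L)) * (norm (g xs))\<^sup>2"
    using L nn by (simp add: power2_eq_square field_simps inner_commute flip: dot_square_norm)
  finally have "(norm (g xs))\<^sup>2 \<le> 0" using L
    by (smt (verit, ccfv_SIG) divide_pos_pos zero_le_power2 mult_pos_pos)
  then show ?thesis by simp
qed

lemma (in prob_space) indep_nn_integral: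
  assumes ind: "indep_var S Y T Z" and H: "H \<in> borel_measurable (S \<Otimes>\<^sub>M T)"
  shows "(\<integral>\<^sup>+ \<omega>. H (Y \<omega>, Z \<omega>) \<partial>M) = (\<integral>\<^sup>+ \<omega>. (\<integral>\<^sup>+ \<omega>'. H (Y \<omega>, Z \<omega>') \<partial>M) \<partial>M)"
proof -
  have rv: "random_variable S Y" "random_variable T Z" and eq: "distr M S Y \<Otimes>\<^sub>M distr M T Z = distr M (S \<Otimes>\<^sub>M T) (\<lambda>x. (Y x, Z x))"
    using ind[unfolded indep_var_distribution_eq] by auto
  interpret PY: prob_space "distr M S Y" by (rule prob_space_distr) (fact rv)
  interpret PZ: prob_space "distr M T Z" by (rule prob_space_distr) (fact rv)
  interpret P: pair_sigma_finite "distr M S Y" "distr M T Z" ..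
  have Hm: "H \<in> borel_measurable (distr M S Y \<Otimes>\<^sub>M distr M T Z)"
    using H by (simp add: measurable_def space_pair_measure sets_pair_measure) 
  have "(\<integral>\<^sup>+ \<omega>. H (Y \<omega>, Z \<omega>) \<partial>M) = (\<integral>\<^sup>+ p. H p \<partial>distr M (S \<Otimes>\<^sub>M T) (\<lambda>x. (Y x, Z x)))"
    using H rv by (subst nn_integral_distr) (auto intro: measurable_Pair)
  also have "\<dots> = (\<integral>\<^sup>+ p. H p \<partial>(distr M S Y \<Otimes>\<^sub>M distr M T Z))" by (simp add: eq)
  also have "\<dots> = (\<integral>\<^sup>+ y. (\<integral>\<^sup>+ z. H (y, z) \<partial>distr M T Z) \<partial>distr M S Y)"
    using PZ.nn_integral_fst[OF Hm] by simp
  also have "\<dots> = (\<integral>\<^sup>+ \<omega>. (\<integral>\<^sup>+ z. H (Y \<omega>, z) \<partial>distr M T Z) \<partial>M)"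
    using PZ.borel_measurable_nn_integral_fst[OF Hm] rv
    by (subst nn_integral_distr) (auto simp: measurable_distr_eq1)
  also have "\<dots> = (\<integral>\<^sup>+ \<omega>. (\<integral>\<^sup>+ \<omega>'. H (Y \<omega>, Z \<omega>') \<partial>M) \<partial>M)"
  proof (rule nn_integral_cong)
    fix \<omega> assume "\<omega> \<in> space M"
    then have "Y \<omega> \<in> space S" using measurable_space[OF rv(1)] by blast
    then have "(\<lambda>z. H (Y \<omega>, z)) \<in> borel_measurable T" using H by simp
    then show "(\<integral>\<^sup>+ z. H (Y \<omega>, z) \<partial>distr M T Z) = (\<integral>\<^sup>+ \<omega>'. H (Y \<omega>, Z \<omega>') \<partial>M)"
      using rv by (subst nn_integral_distr) auto
  qed
  finally show ?thesis .
qed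

lemma final_alg:
  fixes a d nn ff \<eta> bb :: "nat \<Rightarrow> real" and L \<eta>max s2 :: real and T :: nat
  assumes L: "L > 0" and Lmax: "L * \<eta>max < 2"
    and eta: "\<And>t. 0 \<le> \<eta> t \<and> \<eta> t \<le> \<eta>max" and bb: "\<And>t. bb t \<ge> 1"
    and a0: "\<And>t. a t \<ge> 0" and nn0: "\<And>t. nn t \<ge> 0" and ff0: "\<And>t. ff t \<ge> 0" and s2: "s2 \<ge> 0"
    and S1: "\<And>t. a (Suc t) + 2 * \<eta> t * d t \<le> a t + (\<eta> t)\<^sup>2 * nn t + (\<eta> t)\<^sup>2 * s2 / bb t"
    and S2: "\<And>t. ff (Suc t) + \<eta> t * (1 - L * \<eta> t / 2) * nn t \<le> ff t + L * (\<eta> t)\<^sup>2 * s2 / (2 * bb t)"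
    and S: "(\<Sum>t<T. \<eta> t) \<noteq> 0"
  shows "Min (d ` {..<T}) \<le> (a 0 / 2 + \<eta>max * ff 0 / (2 - L * \<eta>max)) * (1 / (\<Sum>t<T. \<eta> t))
     + s2 / 2 * (1 + L * \<eta>max / (2 - L * \<eta>max)) * ((\<Sum>t<T. (\<eta> t)\<^sup>2 / bb t) / (\<Sum>t<T. \<eta> t))"
proof -
  define c where "c = 2 - L * \<eta>max"
  have c: "c > 0" using Lmax by (simp add: c_def)
  define S where "S = (\<Sum>t<T. \<eta> t)"
  define Q where "Q = (\<Sum>t<T. (\<eta> t)\<^sup>2 / bb t)"
  have Spos: "S > 0" using S eta unfolding S_def by (metis order_le_less sum_nonneg)
  have emax: "\<eta>max \<ge> 0" using eta[of 0] by linarith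
  have P1: "\<eta> t * nn t * c \<le> 2 * (ff t - ff (Suc t)) + L * (\<eta> t)\<^sup>2 * s2 / bb t" for t
  proof -
    have "L * \<eta> t \<le> L * \<eta>max" using eta[of t] L by (intro mult_left_mono) auto
    then have "\<eta> t * nn t * (c / 2) \<le> \<eta> t * nn t * (1 - L * \<eta> t / 2)"
      using eta[of t] nn0[of t] unfolding c_def by (intro mult_left_mono) auto
    also have "\<dots> = \<eta> t * (1 - L * \<eta> t / 2) * nn t" by simp
    also have "\<dots> \<le> ff t - ff (Suc t) + L * (\<eta> t)\<^sup>2 * s2 / (2 * bb t)" using S2[of t] by simp
    finally show ?thesis by (simp add: field_simps)
  qed
  have P2: "(\<Sum>t<T. \<eta> t * nn t) * c \<le> 2 * ff 0 + L * s2 * Q"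
  proof -
    have "(\<Sum>t<T. \<eta> t * nn t) * c = (\<Sum>t<T. \<eta> t * nn t * c)" by (simp add: sum_distrib_right)
    also have "\<dots> \<le> (\<Sum>t<T. 2 * (ff t - ff (Suc t)) + L * (\<eta> t)\<^sup>2 * s2 / bb t)" by (intro sum_mono P1)
    also have "\<dots> = 2 * (\<Sum>t<T. ff t - ff (Suc t)) + L * s2 * Q"
      unfolding Q_def sum.distrib sum_distrib_left by (simp add: mult_ac)
    also have "(\<Sum>t<T. ff t - ff (Suc t)) = ff 0 - ff T" by (rule sum_lessThan_telescope')
    finally show ?thesis using ff0[of T] by simp
  qed
  have P4: "2 * (\<Sum>t<T. \<eta> t * d t) \<le> a 0 + \<eta>max * (\<Sum>t<T. \<eta> t * nn t) + s2 * Q"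
  proof -
    have "2 * (\<Sum>t<T. \<eta> t * d t) = (\<Sum>t<T. 2 * \<eta> t * d t)" by (simp add: sum_distrib_left mult_ac)
    also have "\<dots> \<le> (\<Sum>t<T. (a t - a (Suc t)) + \<eta>max * (\<eta> t * nn t) + s2 * ((\<eta> t)\<^sup>2 / bb t))"
    proof (intro sum_mono)
      fix t
      have "(\<eta> t)\<^sup>2 * nn t \<le> \<eta>max * (\<eta> t * nn t)"
        using eta[of t] nn0[of t] by (simp add: power2_eq_square mult_right_mono mult.assoc[symmetric])
      then show "2 * \<eta> t * d t \<le> (a t - a (Suc t)) + \<eta>max * (\<eta> t * nn t) + s2 * ((\<eta> t)\<^sup>2 / bb t)"
        using S1[of t] by (simp add: mult.commute)
    qed
    also have "\<dots> = a 0 - a T + \<eta>max * (\<Sum>t<T. \<eta> t * nn t) + s2 * Q"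
      by (simp add: sum.distrib sum_lessThan_telescope' sum_distrib_left Q_def)
    finally show ?thesis using a0[of T] by simp
  qed
  have "\<eta>max * ((\<Sum>t<T. \<eta> t * nn t) * c) \<le> \<eta>max * (2 * ff 0 + L * s2 * Q)"
    using P2 emax by (rule mult_left_mono)
  then have P5: "\<eta>max * (\<Sum>t<T. \<eta> t * nn t) \<le> \<eta>max * (2 * ff 0 + L * s2 * Q) / c"
    using c by (simp add: field_simps)
  have main: "(\<Sum>t<T. \<eta> t * d t) \<le> S * ((a 0 / 2 + \<eta>max * ff 0 / c) * (1 / S) + s2 / 2 * (1 + L * \<eta>max / c) * (Q / S))"
  proof -
    have "S * ((a 0 / 2 + \<eta>max * ff 0 / c) * (1 / S) + s2 / 2 * (1 + L * \<eta>max / c) * (Q / S))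
        = (a 0 + \<eta>max * (2 * ff 0 + L * s2 * Q) / c + s2 * Q) / 2"
      using Spos c by (simp add: field_simps)
    moreover have "2 * (\<Sum>t<T. \<eta> t * d t) \<le> a 0 + \<eta>max * (2 * ff 0 + L * s2 * Q) / c + s2 * Q"
      using P4 P5 by linarith
    ultimately show ?thesis by (simp only:) (simp add: field_simps)
  qed
  have T: "T \<noteq> 0" using S by (metis lessThan_0 sum.empty)
  have "Min (d ` {..<T}) * S = (\<Sum>t<T. \<eta> t * Min (d ` {..<T}))" by (simp add: S_def sum_distrib_right mult.commute)
  also have "\<dots> \<le> (\<Sum>t<T. \<eta> t * d t)"
    using eta T by (intro sum_mono mult_left_mono) auto
  finally have "Min (d ` {..<T}) * S \<le> S * ((a 0 / 2 + \<eta>max * ff 0 / c) * (1 / S) + s2 / 2 * (1 + L * \<eta>max / c) * (Q / S))"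
    using main by linarith
  then show ?thesis using Spos unfolding c_def S_def Q_def by (simp add: mult.commute)
qed

primrec Th :: "('b \<Rightarrow> 'a \<Rightarrow> 'a::real_vector) \<Rightarrow> (nat \<Rightarrow> nat) \<Rightarrow> (nat \<Rightarrow> real) \<Rightarrow> 'a \<Rightarrow> nat \<Rightarrow> (nat \<times> nat \<Rightarrow> 'b) \<Rightarrow> 'a" where
  "Th G b \<eta> z0 0 y = z0"
| "Th G b \<eta> z0 (Suc s) y = Th G b \<eta> z0 s y - \<eta> s *\<^sub>R ((\<Sum>i<b s. G (y (s, i)) (Th G b \<eta> z0 s y)) /\<^sub>R real (b s))"

locale sgd =
  fixes n :: nat
    and fs :: "nat \<Rightarrow> 'a::euclidean_space \<Rightarrow> real"
    and gfs :: "nat \<Rightarrow> 'a \<Rightarrow> 'a"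
    and L :: "nat \<Rightarrow> real"
    and D :: "'b measure"
    and G :: "'b \<Rightarrow> 'a \<Rightarrow> 'a"
    and \<sigma> :: real
    and M :: "'m measure"
    and X :: "nat \<Rightarrow> nat \<Rightarrow> 'm \<Rightarrow> 'b"
    and b :: "nat \<Rightarrow> nat"
    and \<eta> :: "nat \<Rightarrow> real"
    and \<eta>min \<eta>max :: real
    and \<theta> :: "nat \<Rightarrow> 'm \<Rightarrow> 'a"
    and \<theta>0 \<theta>s :: 'a
    and T :: nat
  assumes n_pos: "n \<ge> 1"
    \<comment> \<open>(A1)\<close>
    and grad: "\<And>i x. i < n \<Longrightarrow> (fs i has_derivative (\<lambda>h. gfs i x \<bullet> h)) (at x)"
    and L_pos: "\<And>i. i < n \<Longrightarrow> L i > 0"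
    and smooth: "\<And>i x y. i < n \<Longrightarrow> norm (gfs i x - gfs i y) \<le> L i * norm (x - y)"
    and bdd: "\<And>i. i < n \<Longrightarrow> bdd_below (range (fs i))"
    \<comment> \<open>(A2)\<close>
    and probD: "prob_space D"
    and G_meas: "(\<lambda>(\<xi>, x). G \<xi> x) \<in> borel_measurable (D \<Otimes>\<^sub>M borel)"
    and G_int: "\<And>x. integrable D (\<lambda>\<xi>. G \<xi> x)"
    and G_unbiased: "\<And>x. (\<integral>\<xi>. G \<xi> x \<partial>D) = (\<Sum>i<n. gfs i x) /\<^sub>R real n"
    and G_var_int: "\<And>x. integrable D (\<lambda>\<xi>. (norm (G \<xi> x - (\<Sum>i<n. gfs i x) /\<^sub>R real n))\<^sup>2)"
    and G_var: "\<And>x. (\<integral>\<xi>. (norm (G \<xi> x - (\<Sum>i<n. gfs i x) /\<^sub>R real n))\<^sup>2 \<partial>D) \<le> \<sigma>\<^sup>2"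
    and \<sigma>_nonneg: "\<sigma> \<ge> 0"
    \<comment> \<open>(A3) and mini-batch SGD: i.i.d. draws X t i, i < b t, all independent\<close>
    and probM: "prob_space M"
    and indep: "prob_space.indep_vars M (\<lambda>_. D) (\<lambda>(t, i). X t i) {(t, i). i < b t}"
    and distrX: "\<And>t i. i < b t \<Longrightarrow> distr M D (X t i) = D"
    and b_pos: "\<And>t. b t \<ge> 1"
    and \<theta>_0: "\<And>\<omega>. \<theta> 0 \<omega> = \<theta>0"
    and \<theta>_Suc: "\<And>t \<omega>. \<theta> (Suc t) \<omega> =
        \<theta> t \<omega> - \<eta> t *\<^sub>R ((\<Sum>i<b t. G (X t i \<omega>) (\<theta> t \<omega>)) /\<^sub>R real (b t))"
    and \<eta>min_nonneg: "0 \<le> \<eta>min"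
    and \<eta>_range: "\<And>t. \<eta>min \<le> \<eta> t \<and> \<eta> t \<le> \<eta>max"
    and \<eta>max_lt: "\<eta>max < 2 / ((\<Sum>i<n. L i) / real n)"
    and convex: "convex_on UNIV (avg_fun n fs)"
    and minimizer: "\<And>x. avg_fun n fs \<theta>s \<le> avg_fun n fs x"
    and sum_ne: "(\<Sum>t<T. \<eta> t) \<noteq> 0"
begin

abbreviation "F \<equiv> avg_fun n fs"
definition "gF x = (\<Sum>i<n. gfs i x) /\<^sub>R real n"
definition "Lb = (\<Sum>i<n. L i) / real n"
abbreviation "fl \<equiv> avg_inf n fs"

lemma Lb_pos: "Lb > 0"
proof -
  have "{..<n} \<noteq> {}" using n_pos by (auto simp: lessThan_empty_iff)
  then show ?thesis unfolding Lb_def using n_pos L_pos by (intro divide_pos_pos sum_pos) auto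
qed

lemma gradF: "(F has_derivative (\<lambda>h. gF x \<bullet> h)) (at x)"
proof -
  have "((\<lambda>x. (\<Sum>i<n. fs i x) / real n) has_derivative (\<lambda>h. (\<Sum>i<n. gfs i x \<bullet> h) / real n)) (at x)"
    using n_pos by (auto intro!: derivative_eq_intros has_derivative_sum grad)
  then show ?thesis
    unfolding avg_fun_def gF_def by (simp add: inner_sum_left divide_inverse mult.commute)
qed

lemma lipF: "norm (gF x - gF y) \<le> Lb * norm (x - y)"
proof -
  have "gF x - gF y = (\<Sum>i<n. gfs i x - gfs i y) /\<^sub>R real n"
    unfolding gF_def by (simp add: sum_subtractf scaleR_diff_right)
  then have "norm (gF x - gF y) = norm (\<Sum>i<n. gfs i x - gfs i y) / real n" by (simp add: divide_inverse mult.commute)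
  also have "\<dots> \<le> (\<Sum>i<n. L i * norm (x - y)) / real n"
    by (intro divide_right_mono order.trans[OF norm_sum sum_mono] smooth) auto
  finally show ?thesis by (simp add: Lb_def sum_distrib_right)
qed

lemma F_ge_fl: "F x \<ge> fl"
proof -
  have "(\<Sum>i<n. Inf (range (fs i))) \<le> (\<Sum>i<n. fs i x)"
    by (intro sum_mono cInf_lower bdd) auto
  then show ?thesis unfolding avg_fun_def avg_inf_def by (intro divide_right_mono) auto
qed

lemma F_cont: "continuous_on UNIV F"
  using gradF by (meson has_derivative_continuous continuous_at_imp_continuous_on)

lemma F_meas[measurable]: "F \<in> borel_measurable borel"
  using F_cont by (rule borel_measurable_continuous_onI)

lemma gF_meas[measurable]: "gF \<in> borel_measurable borel"
proof -
  have "continuous_on UNIV gF"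
    by (rule lipschitz_on_continuous_on[OF lipschitz_onI]) (auto intro!: lipF simp: dist_norm Lb_pos less_imp_le)
  then show ?thesis by (rule borel_measurable_continuous_onI)
qed

lemma gF_zero: "gF \<theta>s = 0"
  by (rule grad_zero_at_min[OF gradF lipF Lb_pos minimizer])

lemma G_comp[measurable (raw)]:
  assumes "f \<in> measurable N D" "g \<in> borel_measurable N"
  shows "(\<lambda>\<omega>. G (f \<omega>) (g \<omega>)) \<in> borel_measurable N"
  using measurable_compose[OF measurable_Pair[OF assms] G_meas] by simp

sublocale M: prob_space M by (rule probM)
sublocale D: prob_space D by (rule probD)

lemma X_meas[measurable]: "i < b t \<Longrightarrow> X t i \<in> measurable M D"
  using indep unfolding M.indep_vars_def by auto

lemma theta_meas[measurable]: "\<theta> t \<in> borel_measurable M"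
proof (induction t)
  case 0 then show ?case by (simp add: \<theta>_0)
next
  case (Suc t)
  have "(\<lambda>\<omega>. \<theta> t \<omega> - \<eta> t *\<^sub>R ((\<Sum>i<b t. G (X t i \<omega>) (\<theta> t \<omega>)) /\<^sub>R real (b t))) \<in> borel_measurable M"
    using Suc by measurable
  then show ?case by (simp add: \<theta>_Suc[abs_def])
qed


lemma Gx_meas[measurable]: "(\<lambda>\<xi>. G \<xi> x) \<in> borel_measurable D"
  using G_comp[OF measurable_ident_sets[OF refl] measurable_const[where c=x and M=D]] by simp

lemma int_Gi:
  assumes i: "i < b t"
  shows "integrable M (\<lambda>\<omega>. G (X t i \<omega>) x)" "(\<integral>\<omega>. G (X t i \<omega>) x \<partial>M) = gF x"
proof -
  have "integrable (distr M D (X t i)) (\<lambda>\<xi>. G \<xi> x)" using distrX[OF i] G_int by simp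
  then show "integrable M (\<lambda>\<omega>. G (X t i \<omega>) x)"
    using i by (subst (asm) integrable_distr_eq) auto
  have "(\<integral>\<omega>. G (X t i \<omega>) x \<partial>M) = (\<integral>\<xi>. G \<xi> x \<partial>distr M D (X t i))"
    using i by (subst integral_distr) auto
  also have "\<dots> = gF x" using distrX[OF i] G_unbiased by (simp add: gF_def)
  finally show "(\<integral>\<omega>. G (X t i \<omega>) x \<partial>M) = gF x" .
qed

definition "ee t x i \<omega> = G (X t i \<omega>) x - gF x"

lemma ee_meas[measurable]: "i < b t \<Longrightarrow> ee t x i \<in> borel_measurable M"
  unfolding ee_def by measurable

lemma ee_int: assumes i: "i < b t" shows "integrable M (ee t x i)" "(\<integral>\<omega>. ee t x i \<omega> \<partial>M) = 0"
  using int_Gi[OF i, of x] unfolding ee_def by (auto simp: M.prob_space)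

lemma ee_var:
  assumes i: "i < b t"
  shows "integrable M (\<lambda>\<omega>. (norm (ee t x i \<omega>))\<^sup>2)" "(\<integral>\<omega>. (norm (ee t x i \<omega>))\<^sup>2 \<partial>M) \<le> \<sigma>\<^sup>2"
proof -
  have "integrable (distr M D (X t i)) (\<lambda>\<xi>. (norm (G \<xi> x - gF x))\<^sup>2)" using distrX[OF i] G_var_int by (simp add: gF_def)
  then show "integrable M (\<lambda>\<omega>. (norm (ee t x i \<omega>))\<^sup>2)"
    using i unfolding ee_def by (subst (asm) integrable_distr_eq) auto
  have "(\<integral>\<omega>. (norm (ee t x i \<omega>))\<^sup>2 \<partial>M) = (\<integral>\<xi>. (norm (G \<xi> x - gF x))\<^sup>2 \<partial>distr M D (X t i))"
    using i unfolding ee_def by (subst integral_distr) auto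
  also have "\<dots> \<le> \<sigma>\<^sup>2" using distrX[OF i] G_var by (simp add: gF_def)
  finally show "(\<integral>\<omega>. (norm (ee t x i \<omega>))\<^sup>2 \<partial>M) \<le> \<sigma>\<^sup>2" .
qed

lemma ee_cross:
  assumes i: "i < b t" and j: "j < b t" and ij: "i \<noteq> j"
  shows "integrable M (\<lambda>\<omega>. ee t x i \<omega> \<bullet> ee t x j \<omega>)" "(\<integral>\<omega>. ee t x i \<omega> \<bullet> ee t x j \<omega> \<partial>M) = 0"
proof -
  let ?X = "\<lambda>(t, i). X t i"
  have ind: "M.indep_var (PiM {(t,i)} (\<lambda>_. D)) (\<lambda>\<omega>. restrict (\<lambda>p. ?X p \<omega>) {(t,i)})
                         (PiM {(t,j)} (\<lambda>_. D)) (\<lambda>\<omega>. restrict (\<lambda>p. ?X p \<omega>) {(t,j)})"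
    by (rule M.indep_var_restrict[OF indep]) (use i j ij in auto)
  have k: "M.indep_var borel (\<lambda>\<omega>. ee t x i \<omega> \<bullet> k) borel (\<lambda>\<omega>. ee t x j \<omega> \<bullet> k)" for k
  proof -
    have "(\<lambda>r. r (t,i)) \<in> measurable (PiM {(t,i)} (\<lambda>_. D)) D" by (rule measurable_component_singleton) simp
    from G_comp[OF this measurable_const[where c=x]]
    have m1: "(\<lambda>r. (G (r (t,i)) x - gF x) \<bullet> k) \<in> borel_measurable (PiM {(t,i)} (\<lambda>_. D))"
      by (intro borel_measurable_inner borel_measurable_diff measurable_const) simp_all
    have "(\<lambda>r. r (t,j)) \<in> measurable (PiM {(t,j)} (\<lambda>_. D)) D" by (rule measurable_component_singleton) simp
    from G_comp[OF this measurable_const[where c=x]]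
    have m2: "(\<lambda>r. (G (r (t,j)) x - gF x) \<bullet> k) \<in> borel_measurable (PiM {(t,j)} (\<lambda>_. D))"
      by (intro borel_measurable_inner borel_measurable_diff measurable_const) simp_all
    from M.indep_var_compose[OF ind m1 m2] show ?thesis by (simp add: o_def ee_def)
  qed
  have eq: "(\<lambda>\<omega>. ee t x i \<omega> \<bullet> ee t x j \<omega>) = (\<lambda>\<omega>. \<Sum>k\<in>Basis. (ee t x i \<omega> \<bullet> k) * (ee t x j \<omega> \<bullet> k))"
    by (rule ext) (rule euclidean_inner)
  have ik: "integrable M (\<lambda>\<omega>. ee t x i \<omega> \<bullet> k)" "integrable M (\<lambda>\<omega>. ee t x j \<omega> \<bullet> k)" for k
    using ee_int[OF i, of x] ee_int[OF j, of x] by auto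
  show "integrable M (\<lambda>\<omega>. ee t x i \<omega> \<bullet> ee t x j \<omega>)"
    unfolding eq by (intro Bochner_Integration.integrable_sum M.indep_var_integrable k ik)
  have "(\<integral>\<omega>. (\<Sum>k\<in>Basis. (ee t x i \<omega> \<bullet> k) * (ee t x j \<omega> \<bullet> k)) \<partial>M)
      = (\<Sum>k\<in>Basis. (\<integral>\<omega>. (ee t x i \<omega> \<bullet> k) * (ee t x j \<omega> \<bullet> k) \<partial>M))"
    by (intro Bochner_Integration.integral_sum M.indep_var_integrable k ik)
  also have "\<dots> = (\<Sum>k\<in>Basis. (\<integral>\<omega>. ee t x i \<omega> \<bullet> k \<partial>M) * (\<integral>\<omega>. ee t x j \<omega> \<bullet> k \<partial>M))"
    by (intro sum.cong refl M.indep_var_lebesgue_integral k ik)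
  also have "\<dots> = 0" using ee_int[OF i, of x] ee_int[OF j, of x] by simp
  finally show "(\<integral>\<omega>. ee t x i \<omega> \<bullet> ee t x j \<omega> \<partial>M) = 0" unfolding eq .
qed


lemma sum_ee_var:
  shows "integrable M (\<lambda>\<omega>. (norm (\<Sum>i<b t. ee t x i \<omega>))\<^sup>2)"
    "(\<integral>\<omega>. (norm (\<Sum>i<b t. ee t x i \<omega>))\<^sup>2 \<partial>M) \<le> real (b t) * \<sigma>\<^sup>2"
proof -
  have eq: "(norm (\<Sum>i<b t. ee t x i \<omega>))\<^sup>2 = (\<Sum>i<b t. \<Sum>j<b t. ee t x i \<omega> \<bullet> ee t x j \<omega>)" for \<omega>
    by (simp add: power2_norm_eq_inner inner_sum_left inner_sum_right) (rule sum.swap)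
  have ij: "integrable M (\<lambda>\<omega>. ee t x i \<omega> \<bullet> ee t x j \<omega>) \<and>
     (\<integral>\<omega>. ee t x i \<omega> \<bullet> ee t x j \<omega> \<partial>M) = (if i = j then (\<integral>\<omega>. (norm (ee t x i \<omega>))\<^sup>2 \<partial>M) else 0)"
    if i: "i < b t" and j: "j < b t" for i j
  proof (cases "i = j")
    case True
    then show ?thesis using ee_var[OF i, of x] by (simp add: power2_norm_eq_inner)
  next
    case False
    then show ?thesis using ee_cross[OF i j False] by simp
  qed
  show "integrable M (\<lambda>\<omega>. (norm (\<Sum>i<b t. ee t x i \<omega>))\<^sup>2)"
    unfolding eq using ij by (intro Bochner_Integration.integrable_sum) auto
  have "(\<integral>\<omega>. (norm (\<Sum>i<b t. ee t x i \<omega>))\<^sup>2 \<partial>M) = (\<Sum>i<b t. \<Sum>j<b t. (\<integral>\<omega>. ee t x i \<omega> \<bullet> ee t x j \<omega> \<partial>M))"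
    unfolding eq using ij by (subst Bochner_Integration.integral_sum; auto intro!: sum.cong Bochner_Integration.integral_sum Bochner_Integration.integrable_sum)
  also have "\<dots> = (\<Sum>i<b t. \<Sum>j<b t. (if i = j then (\<integral>\<omega>. (norm (ee t x i \<omega>))\<^sup>2 \<partial>M) else 0))"
    using ij by (intro sum.cong refl) auto
  also have "\<dots> = (\<Sum>i<b t. (\<integral>\<omega>. (norm (ee t x i \<omega>))\<^sup>2 \<partial>M))"
    by (intro sum.cong refl) (simp add: sum.delta)
  also have "\<dots> \<le> (\<Sum>i<b t. \<sigma>\<^sup>2)" using ee_var by (intro sum_mono) auto
  finally show "(\<integral>\<omega>. (norm (\<Sum>i<b t. ee t x i \<omega>))\<^sup>2 \<partial>M) \<le> real (b t) * \<sigma>\<^sup>2" by simp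
qed

definition "ww t x \<omega> = (\<Sum>i<b t. ee t x i \<omega>) /\<^sub>R real (b t)"

lemma bt_pos: "real (b t) > 0" using b_pos[of t] by simp

lemma avg_eq: "(\<Sum>i<b t. G (X t i \<omega>) x) /\<^sub>R real (b t) = gF x + ww t x \<omega>"
proof -
  have "(\<Sum>i<b t. ee t x i \<omega>) = (\<Sum>i<b t. G (X t i \<omega>) x) - real (b t) *\<^sub>R gF x"
    by (simp add: ee_def sum_subtractf sum_constant_scaleR)
  then show ?thesis using bt_pos[of t] unfolding ww_def
    by (simp add: scaleR_diff_right)
qed

lemma ww_meas[measurable]: "ww t x \<in> borel_measurable M"
  unfolding ww_def by (intro borel_measurable_scaleR borel_measurable_sum ee_meas measurable_const) auto

lemma ww_int: "integrable M (ww t x)" "(\<integral>\<omega>. ww t x \<omega> \<partial>M) = 0"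
  unfolding ww_def using ee_int
  by (auto intro!: Bochner_Integration.integrable_sum integrable_scaleR_right simp: Bochner_Integration.integral_sum)

lemma ww_var: "integrable M (\<lambda>\<omega>. (norm (ww t x \<omega>))\<^sup>2)" "(\<integral>\<omega>. (norm (ww t x \<omega>))\<^sup>2 \<partial>M) \<le> \<sigma>\<^sup>2 / real (b t)"
proof -
  have eq: "(norm (ww t x \<omega>))\<^sup>2 = (norm (\<Sum>i<b t. ee t x i \<omega>))\<^sup>2 / (real (b t))\<^sup>2" for \<omega>
    unfolding ww_def using bt_pos[of t] by (simp add: power2_eq_square field_simps)
  show "integrable M (\<lambda>\<omega>. (norm (ww t x \<omega>))\<^sup>2)" unfolding eq using sum_ee_var(1) by simp
  have "(\<integral>\<omega>. (norm (ww t x \<omega>))\<^sup>2 \<partial>M) = (\<integral>\<omega>. (norm (\<Sum>i<b t. ee t x i \<omega>))\<^sup>2 \<partial>M) / (real (b t))\<^sup>2"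
    unfolding eq by simp
  also have "\<dots> \<le> real (b t) * \<sigma>\<^sup>2 / (real (b t))\<^sup>2"
    using sum_ee_var(2) by (intro divide_right_mono) auto
  also have "\<dots> = \<sigma>\<^sup>2 / real (b t)" using bt_pos[of t] by (simp add: power2_eq_square)
  finally show "(\<integral>\<omega>. (norm (ww t x \<omega>))\<^sup>2 \<partial>M) \<le> \<sigma>\<^sup>2 / real (b t)" .
qed


lemma norm_sq_diff: "(norm (a - c *\<^sub>R v))\<^sup>2 = (norm a)\<^sup>2 - 2 * c * (a \<bullet> v) + c\<^sup>2 * (norm v)\<^sup>2"
  for a v :: "'c::real_inner"
  by (simp only: power2_norm_eq_inner) (simp add: inner_diff_left inner_diff_right inner_commute power2_eq_square algebra_simps)

lemma norm_sq_add: "(norm (a + v))\<^sup>2 = (norm a)\<^sup>2 + 2 * (a \<bullet> v) + (norm v)\<^sup>2"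
  for a v :: "'c::real_inner"
  by (simp add: power2_norm_eq_inner inner_add_left inner_add_right inner_commute)

lemma eta_nonneg: "\<eta> t \<ge> 0" using \<eta>min_nonneg \<eta>_range[of t] by linarith

lemma step1:
  "(\<integral>\<^sup>+ \<omega>. ennreal ((norm (x - \<eta> t *\<^sub>R ((\<Sum>i<b t. G (X t i \<omega>) x) /\<^sub>R real (b t)) - \<theta>s))\<^sup>2 + 2 * \<eta> t * (F x - F \<theta>s)) \<partial>M)
   \<le> ennreal ((norm (x - \<theta>s))\<^sup>2 + (\<eta> t)\<^sup>2 * (norm (gF x))\<^sup>2 + (\<eta> t)\<^sup>2 * \<sigma>\<^sup>2 / real (b t))"
proof -
  define p where "p = x - \<theta>s - \<eta> t *\<^sub>R gF x"
  define c where "c = 2 * \<eta> t * (F x - F \<theta>s)"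
  have c0: "c \<ge> 0" unfolding c_def using eta_nonneg[of t] minimizer[of x] by simp
  define h where "h \<omega> = (norm p)\<^sup>2 + c - 2 * \<eta> t * (p \<bullet> ww t x \<omega>) + (\<eta> t)\<^sup>2 * (norm (ww t x \<omega>))\<^sup>2" for \<omega>
  have pt: "(norm (x - \<eta> t *\<^sub>R ((\<Sum>i<b t. G (X t i \<omega>) x) /\<^sub>R real (b t)) - \<theta>s))\<^sup>2 + 2 * \<eta> t * (F x - F \<theta>s) = h \<omega>" for \<omega>
  proof -
    have "x - \<eta> t *\<^sub>R ((\<Sum>i<b t. G (X t i \<omega>) x) /\<^sub>R real (b t)) - \<theta>s = p - \<eta> t *\<^sub>R ww t x \<omega>"
      unfolding avg_eq p_def by (simp add: algebra_simps)
    then show ?thesis unfolding h_def c_def by (simp add: norm_sq_diff)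
  qed
  have hint: "integrable M h"
    unfolding h_def using ww_int ww_var by auto
  have hint_eq: "(\<integral>\<omega>. h \<omega> \<partial>M) = (norm p)\<^sup>2 + c + (\<eta> t)\<^sup>2 * (\<integral>\<omega>. (norm (ww t x \<omega>))\<^sup>2 \<partial>M)"
    unfolding h_def using ww_int ww_var by (simp add: M.prob_space)
  have h0: "h \<omega> \<ge> 0" for \<omega> using pt[of \<omega>, symmetric] c0 eta_nonneg[of t] minimizer[of x] by simp
  have "(\<integral>\<^sup>+ \<omega>. ennreal ((norm (x - \<eta> t *\<^sub>R ((\<Sum>i<b t. G (X t i \<omega>) x) /\<^sub>R real (b t)) - \<theta>s))\<^sup>2 + 2 * \<eta> t * (F x - F \<theta>s)) \<partial>M)
      = (\<integral>\<^sup>+ \<omega>. ennreal (h \<omega>) \<partial>M)" by (simp only: pt)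
  also have "\<dots> = ennreal (\<integral>\<omega>. h \<omega> \<partial>M)" using hint h0 by (intro nn_integral_eq_integral) auto
  also have "\<dots> \<le> ennreal ((norm (x - \<theta>s))\<^sup>2 + (\<eta> t)\<^sup>2 * (norm (gF x))\<^sup>2 + (\<eta> t)\<^sup>2 * \<sigma>\<^sup>2 / real (b t))"
  proof (rule ennreal_leI)
    have tan: "F \<theta>s \<ge> F x + gF x \<bullet> (\<theta>s - x)" by (rule convex_tangent[OF gradF convex])
    have "c \<le> 2 * \<eta> t * (gF x \<bullet> (x - \<theta>s))"
      unfolding c_def using tan eta_nonneg[of t]
      by (intro mult_left_mono) (auto simp: inner_diff_right)
    moreover have "(norm p)\<^sup>2 = (norm (x - \<theta>s))\<^sup>2 - 2 * \<eta> t * ((x - \<theta>s) \<bullet> gF x) + (\<eta> t)\<^sup>2 * (norm (gF x))\<^sup>2"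
      unfolding p_def by (rule norm_sq_diff)
    moreover have "(\<eta> t)\<^sup>2 * (\<integral>\<omega>. (norm (ww t x \<omega>))\<^sup>2 \<partial>M) \<le> (\<eta> t)\<^sup>2 * (\<sigma>\<^sup>2 / real (b t))"
      using ww_var by (intro mult_left_mono) auto
    ultimately show "(\<integral>\<omega>. h \<omega> \<partial>M) \<le> (norm (x - \<theta>s))\<^sup>2 + (\<eta> t)\<^sup>2 * (norm (gF x))\<^sup>2 + (\<eta> t)\<^sup>2 * \<sigma>\<^sup>2 / real (b t)"
      unfolding hint_eq by (simp add: inner_commute)
  qed
  finally show ?thesis .
qed


lemma Lb_eta: "Lb * \<eta> t < 2"
proof -
  have "Lb * \<eta> t \<le> Lb * \<eta>max" using \<eta>_range[of t] Lb_pos by (intro mult_left_mono) auto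
  also have "\<dots> < 2" using \<eta>max_lt Lb_pos unfolding Lb_def[symmetric] by (simp add: field_simps)
  finally show ?thesis .
qed

lemma step2:
  "(\<integral>\<^sup>+ \<omega>. ennreal (F (x - \<eta> t *\<^sub>R ((\<Sum>i<b t. G (X t i \<omega>) x) /\<^sub>R real (b t))) - fl
        + \<eta> t * (1 - Lb * \<eta> t / 2) * (norm (gF x))\<^sup>2) \<partial>M)
   \<le> ennreal (F x - fl + Lb * (\<eta> t)\<^sup>2 * \<sigma>\<^sup>2 / (2 * real (b t)))"
proof -
  define q where "q = \<eta> t * (1 - Lb * \<eta> t / 2)"
  have q0: "q \<ge> 0" unfolding q_def using eta_nonneg[of t] Lb_eta[of t] by simp
  define u where "u \<omega> = F (x - \<eta> t *\<^sub>R ((\<Sum>i<b t. G (X t i \<omega>) x) /\<^sub>R real (b t))) - fl + q * (norm (gF x))\<^sup>2" for \<omega>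
  define v where "v \<omega> = F x - fl + (Lb * (\<eta> t)\<^sup>2 - \<eta> t) * (gF x \<bullet> ww t x \<omega>) + Lb * (\<eta> t)\<^sup>2 / 2 * (norm (ww t x \<omega>))\<^sup>2" for \<omega>
  have u0: "u \<omega> \<ge> 0" for \<omega> unfolding u_def using F_ge_fl q0 by (smt (verit) zero_le_power2 mult_nonneg_nonneg)
  have uv: "u \<omega> \<le> v \<omega>" for \<omega>
  proof -
    let ?g = "gF x" and ?w = "ww t x \<omega>"
    have y: "x - \<eta> t *\<^sub>R ((\<Sum>i<b t. G (X t i \<omega>) x) /\<^sub>R real (b t)) - x = - (\<eta> t *\<^sub>R (?g + ?w))"
      by (simp add: avg_eq)
    have d: "F (x - \<eta> t *\<^sub>R ((\<Sum>i<b t. G (X t i \<omega>) x) /\<^sub>R real (b t))) \<le> F x + ?g \<bullet> (- (\<eta> t *\<^sub>R (?g + ?w))) + Lb / 2 * (norm (- (\<eta> t *\<^sub>R (?g + ?w))))\<^sup>2"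
      using descent[OF gradF lipF, of "x - \<eta> t *\<^sub>R ((\<Sum>i<b t. G (X t i \<omega>) x) /\<^sub>R real (b t))" x] unfolding y .
    have e1: "?g \<bullet> (- (\<eta> t *\<^sub>R (?g + ?w))) = - \<eta> t * (norm ?g)\<^sup>2 - \<eta> t * (?g \<bullet> ?w)"
      by (simp add: inner_add_right power2_norm_eq_inner algebra_simps)
    have e2: "(norm (- (\<eta> t *\<^sub>R (?g + ?w))))\<^sup>2 = (\<eta> t)\<^sup>2 * ((norm ?g)\<^sup>2 + 2 * (?g \<bullet> ?w) + (norm ?w)\<^sup>2)"
      by (simp only: norm_minus_cancel norm_scaleR power_mult_distrib norm_sq_add) simp
    show ?thesis using d unfolding u_def v_def e1 e2 q_def by (simp add: algebra_simps power2_eq_square)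
  qed
  have vint: "integrable M v" unfolding v_def using ww_int ww_var by auto
  have vint_eq: "(\<integral>\<omega>. v \<omega> \<partial>M) = F x - fl + Lb * (\<eta> t)\<^sup>2 / 2 * (\<integral>\<omega>. (norm (ww t x \<omega>))\<^sup>2 \<partial>M)"
    unfolding v_def using ww_int ww_var by (simp add: M.prob_space)
  have umeas: "u \<in> borel_measurable M" unfolding u_def by measurable
  have uint: "integrable M u"
    by (rule Bochner_Integration.integrable_bound[OF vint umeas]) (use u0 uv in \<open>auto intro!: AE_I2 order.trans[OF _ abs_ge_self]\<close>)
  have "(\<integral>\<^sup>+ \<omega>. ennreal (F (x - \<eta> t *\<^sub>R ((\<Sum>i<b t. G (X t i \<omega>) x) /\<^sub>R real (b t))) - fl
        + \<eta> t * (1 - Lb * \<eta> t / 2) * (norm (gF x))\<^sup>2) \<partial>M) = (\<integral>\<^sup>+ \<omega>. ennreal (u \<omega>) \<partial>M)"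
    unfolding u_def q_def ..
  also have "\<dots> = ennreal (\<integral>\<omega>. u \<omega> \<partial>M)" using uint u0 by (intro nn_integral_eq_integral) auto
  also have "\<dots> \<le> ennreal (F x - fl + Lb * (\<eta> t)\<^sup>2 * \<sigma>\<^sup>2 / (2 * real (b t)))"
  proof (rule ennreal_leI)
    have "(\<integral>\<omega>. u \<omega> \<partial>M) \<le> (\<integral>\<omega>. v \<omega> \<partial>M)" using uint vint uv by (intro integral_mono) auto
    also have "\<dots> \<le> F x - fl + Lb * (\<eta> t)\<^sup>2 / 2 * (\<sigma>\<^sup>2 / real (b t))"
      unfolding vint_eq using ww_var Lb_pos by (intro add_left_mono mult_left_mono) auto
    finally show "(\<integral>\<omega>. u \<omega> \<partial>M) \<le> F x - fl + Lb * (\<eta> t)\<^sup>2 * \<sigma>\<^sup>2 / (2 * real (b t))" by simp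
  qed
  finally show ?thesis .
qed


abbreviation "Th' \<equiv> Th G b \<eta> \<theta>0"
definition "K0 t = {(s, i). s < t \<and> i < b s}"
definition "K1 t = {(s, i). s = t \<and> i < b t}"
definition "Y t \<omega> = restrict (\<lambda>p. (\<lambda>(t, i). X t i) p \<omega>) (K0 t)"
definition "Z t \<omega> = restrict (\<lambda>p. (\<lambda>(t, i). X t i) p \<omega>) (K1 t)"

lemma theta_Th: "\<theta> t \<omega> = Th' t (\<lambda>p. (\<lambda>(t, i). X t i) p \<omega>)"
  by (induction t) (simp_all add: \<theta>_0 \<theta>_Suc)

lemma Th_local: "(\<And>p. p \<in> K0 t \<Longrightarrow> y p = y' p) \<Longrightarrow> Th' t y = Th' t y'"
proof (induction t)
  case 0 then show ?case by simp
next
  case (Suc t)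
  have "Th' t y = Th' t y'" using Suc.prems by (intro Suc.IH) (auto simp: K0_def)
  moreover have "y (t, i) = y' (t, i)" if "i < b t" for i using Suc.prems that by (auto simp: K0_def)
  ultimately show ?case by simp
qed

lemma Th_Y: "Th' t (Y t \<omega>) = \<theta> t \<omega>"
  unfolding theta_Th by (rule Th_local) (simp add: Y_def)

lemma step_meas:
  assumes "\<And>i. i < b t \<Longrightarrow> f i \<in> measurable N D" "g \<in> borel_measurable N"
  shows "(\<lambda>\<omega>. g \<omega> - \<eta> t *\<^sub>R ((\<Sum>i<b t. G (f i \<omega>) (g \<omega>)) /\<^sub>R real (b t))) \<in> borel_measurable N"
  using assms by (intro borel_measurable_diff borel_measurable_scaleR borel_measurable_sum G_comp measurable_const) auto

lemma Th_meas: "s \<le> t \<Longrightarrow> Th' s \<in> borel_measurable (PiM (K0 t) (\<lambda>_. D))"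
proof (induction s)
  case 0 then show ?case by simp
next
  case (Suc s)
  have "(\<lambda>y. y (s, i)) \<in> measurable (PiM (K0 t) (\<lambda>_. D)) D" if "i < b s" for i
    by (rule measurable_component_singleton) (use Suc.prems that in \<open>auto simp: K0_def\<close>)
  then have "(\<lambda>y. Th' s y - \<eta> s *\<^sub>R ((\<Sum>i<b s. G (y (s, i)) (Th' s y)) /\<^sub>R real (b s))) \<in> borel_measurable (PiM (K0 t) (\<lambda>_. D))"
    using Suc by (intro step_meas) auto
  then show ?case by simp
qed

lemma indepYZ: "M.indep_var (PiM (K0 t) (\<lambda>_. D)) (Y t) (PiM (K1 t) (\<lambda>_. D)) (Z t)"
  unfolding Y_def[abs_def] Z_def[abs_def]
  by (rule M.indep_var_restrict[OF indep]) (auto simp: K0_def K1_def)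

lemma Z_app: "i < b t \<Longrightarrow> Z t \<omega> (t, i) = X t i \<omega>"
  by (simp add: Z_def K1_def)

lemma meas_fst_snd:
  shows "(\<lambda>p. Th' t (fst p)) \<in> borel_measurable (PiM (K0 t) (\<lambda>_. D) \<Otimes>\<^sub>M PiM (K1 t) (\<lambda>_. D))"
    and "i < b t \<Longrightarrow> (\<lambda>p. snd p (t, i)) \<in> measurable (PiM (K0 t) (\<lambda>_. D) \<Otimes>\<^sub>M PiM (K1 t) (\<lambda>_. D)) D"
proof -
  show "(\<lambda>p. Th' t (fst p)) \<in> borel_measurable (PiM (K0 t) (\<lambda>_. D) \<Otimes>\<^sub>M PiM (K1 t) (\<lambda>_. D))"
    by (rule measurable_compose[OF measurable_fst Th_meas]) simp
  assume "i < b t"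
  then have "(\<lambda>y. y (t, i)) \<in> measurable (PiM (K1 t) (\<lambda>_. D)) D"
    by (intro measurable_component_singleton) (auto simp: K1_def)
  then show "(\<lambda>p. snd p (t, i)) \<in> measurable (PiM (K0 t) (\<lambda>_. D) \<Otimes>\<^sub>M PiM (K1 t) (\<lambda>_. D)) D"
    by (rule measurable_compose[OF measurable_snd])
qed

lemma phi_meas: "(\<lambda>p. Th' t (fst p) - \<eta> t *\<^sub>R ((\<Sum>i<b t. G (snd p (t, i)) (Th' t (fst p))) /\<^sub>R real (b t)))
   \<in> borel_measurable (PiM (K0 t) (\<lambda>_. D) \<Otimes>\<^sub>M PiM (K1 t) (\<lambda>_. D))"
  by (intro step_meas meas_fst_snd)


definition "AA t = (\<integral>\<^sup>+ \<omega>. ennreal ((norm (\<theta> t \<omega> - \<theta>s))\<^sup>2) \<partial>M)"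
definition "DD t = (\<integral>\<^sup>+ \<omega>. ennreal (F (\<theta> t \<omega>) - F \<theta>s) \<partial>M)"
definition "NN t = (\<integral>\<^sup>+ \<omega>. ennreal ((norm (gF (\<theta> t \<omega>)))\<^sup>2) \<partial>M)"
definition "FF t = (\<integral>\<^sup>+ \<omega>. ennreal (F (\<theta> t \<omega>) - fl) \<partial>M)"

lemma S1e: "AA (Suc t) + ennreal (2 * \<eta> t) * DD t \<le> AA t + ennreal ((\<eta> t)\<^sup>2) * NN t + ennreal ((\<eta> t)\<^sup>2 * \<sigma>\<^sup>2 / real (b t))"
proof -
  define phi where "phi p = Th' t (fst p) - \<eta> t *\<^sub>R ((\<Sum>i<b t. G (snd p (t, i)) (Th' t (fst p))) /\<^sub>R real (b t))" for p
  define H where "H p = ennreal ((norm (phi p - \<theta>s))\<^sup>2 + 2 * \<eta> t * (F (Th' t (fst p)) - F \<theta>s))" for p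
  let ?S = "PiM (K0 t) (\<lambda>_. D) \<Otimes>\<^sub>M PiM (K1 t) (\<lambda>_. D)"
  have pm: "phi \<in> borel_measurable ?S" using phi_meas unfolding phi_def[abs_def] .
  have a: "(\<lambda>p. phi p - \<theta>s) \<in> borel_measurable ?S" by (intro borel_measurable_diff pm) simp
  have n: "(\<lambda>p. norm (phi p - \<theta>s)) \<in> borel_measurable ?S" by (rule measurable_compose[OF a borel_measurable_norm])
  have f: "(\<lambda>p. F (Th' t (fst p))) \<in> borel_measurable ?S" by (rule measurable_compose[OF meas_fst_snd(1) F_meas])
  have r: "(\<lambda>p. (norm (phi p - \<theta>s))\<^sup>2 + 2 * \<eta> t * (F (Th' t (fst p)) - F \<theta>s)) \<in> borel_measurable ?S"
    using n f by measurable
  have Hm: "H \<in> borel_measurable ?S"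
    unfolding H_def[abs_def] by (rule measurable_compose[OF r measurable_ennreal])
  have e2: "0 \<le> 2 * \<eta> t" using eta_nonneg[of t] by simp
  have "AA (Suc t) + ennreal (2 * \<eta> t) * DD t
      = (\<integral>\<^sup>+ \<omega>. ennreal ((norm (\<theta> (Suc t) \<omega> - \<theta>s))\<^sup>2) + ennreal (2 * \<eta> t) * ennreal (F (\<theta> t \<omega>) - F \<theta>s) \<partial>M)"
    unfolding AA_def DD_def by (subst nn_integral_add) (auto simp: nn_integral_cmult)
  also have "\<dots> = (\<integral>\<^sup>+ \<omega>. H (Y t \<omega>, Z t \<omega>) \<partial>M)"
  proof (rule nn_integral_cong)
    fix \<omega>
    have "ennreal ((norm (\<theta> (Suc t) \<omega> - \<theta>s))\<^sup>2) + ennreal (2 * \<eta> t) * ennreal (F (\<theta> t \<omega>) - F \<theta>s)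
       = ennreal ((norm (\<theta> (Suc t) \<omega> - \<theta>s))\<^sup>2 + 2 * \<eta> t * (F (\<theta> t \<omega>) - F \<theta>s))"
      using e2 minimizer[of "\<theta> t \<omega>"] by (simp add: ennreal_plus ennreal_mult)
    also have "\<dots> = H (Y t \<omega>, Z t \<omega>)"
      unfolding H_def phi_def by (simp add: Th_Y \<theta>_Suc Z_app)
    finally show "ennreal ((norm (\<theta> (Suc t) \<omega> - \<theta>s))\<^sup>2) + ennreal (2 * \<eta> t) * ennreal (F (\<theta> t \<omega>) - F \<theta>s) = H (Y t \<omega>, Z t \<omega>)" .
  qed
  also have "\<dots> = (\<integral>\<^sup>+ \<omega>. (\<integral>\<^sup>+ \<omega>'. H (Y t \<omega>, Z t \<omega>') \<partial>M) \<partial>M)"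
    by (rule M.indep_nn_integral[OF indepYZ Hm])
  also have "\<dots> = (\<integral>\<^sup>+ \<omega>. (\<integral>\<^sup>+ \<omega>'. ennreal ((norm (\<theta> t \<omega> - \<eta> t *\<^sub>R ((\<Sum>i<b t. G (X t i \<omega>') (\<theta> t \<omega>)) /\<^sub>R real (b t)) - \<theta>s))\<^sup>2
        + 2 * \<eta> t * (F (\<theta> t \<omega>) - F \<theta>s)) \<partial>M) \<partial>M)"
    unfolding H_def phi_def by (simp add: Th_Y Z_app)
  also have "\<dots> \<le> (\<integral>\<^sup>+ \<omega>. ennreal ((norm (\<theta> t \<omega> - \<theta>s))\<^sup>2 + (\<eta> t)\<^sup>2 * (norm (gF (\<theta> t \<omega>)))\<^sup>2 + (\<eta> t)\<^sup>2 * \<sigma>\<^sup>2 / real (b t)) \<partial>M)"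
    by (intro nn_integral_mono step1)
  also have "\<dots> = AA t + ennreal ((\<eta> t)\<^sup>2) * NN t + ennreal ((\<eta> t)\<^sup>2 * \<sigma>\<^sup>2 / real (b t))"
    unfolding AA_def NN_def
    by (simp add: ennreal_plus ennreal_mult nn_integral_add nn_integral_cmult M.emeasure_space_1 add_nonneg_nonneg)
  finally show ?thesis .
qed


lemma S2e: "FF (Suc t) + ennreal (\<eta> t * (1 - Lb * \<eta> t / 2)) * NN t \<le> FF t + ennreal (Lb * (\<eta> t)\<^sup>2 * \<sigma>\<^sup>2 / (2 * real (b t)))"
proof -
  define q where "q = \<eta> t * (1 - Lb * \<eta> t / 2)"
  have q0: "q \<ge> 0" unfolding q_def using eta_nonneg[of t] Lb_eta[of t] by simp
  define phi where "phi p = Th' t (fst p) - \<eta> t *\<^sub>R ((\<Sum>i<b t. G (snd p (t, i)) (Th' t (fst p))) /\<^sub>R real (b t))" for p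
  define H where "H p = ennreal (F (phi p) - fl + q * (norm (gF (Th' t (fst p))))\<^sup>2)" for p
  let ?S = "PiM (K0 t) (\<lambda>_. D) \<Otimes>\<^sub>M PiM (K1 t) (\<lambda>_. D)"
  have pm: "phi \<in> borel_measurable ?S" using phi_meas unfolding phi_def[abs_def] .
  have f1: "(\<lambda>p. F (phi p)) \<in> borel_measurable ?S" by (rule measurable_compose[OF pm F_meas])
  have g: "(\<lambda>p. gF (Th' t (fst p))) \<in> borel_measurable ?S" by (rule measurable_compose[OF meas_fst_snd(1) gF_meas])
  have n: "(\<lambda>p. norm (gF (Th' t (fst p)))) \<in> borel_measurable ?S" by (rule measurable_compose[OF g borel_measurable_norm])
  have r: "(\<lambda>p. F (phi p) - fl + q * (norm (gF (Th' t (fst p))))\<^sup>2) \<in> borel_measurable ?S"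
    using n f1 by measurable
  have Hm: "H \<in> borel_measurable ?S"
    unfolding H_def[abs_def] by (rule measurable_compose[OF r measurable_ennreal])
  have "FF (Suc t) + ennreal q * NN t
      = (\<integral>\<^sup>+ \<omega>. ennreal (F (\<theta> (Suc t) \<omega>) - fl) + ennreal q * ennreal ((norm (gF (\<theta> t \<omega>)))\<^sup>2) \<partial>M)"
    unfolding FF_def NN_def by (subst nn_integral_add) (auto simp: nn_integral_cmult)
  also have "\<dots> = (\<integral>\<^sup>+ \<omega>. H (Y t \<omega>, Z t \<omega>) \<partial>M)"
  proof (rule nn_integral_cong)
    fix \<omega>
    have "ennreal (F (\<theta> (Suc t) \<omega>) - fl) + ennreal q * ennreal ((norm (gF (\<theta> t \<omega>)))\<^sup>2)
       = ennreal (F (\<theta> (Suc t) \<omega>) - fl + q * (norm (gF (\<theta> t \<omega>)))\<^sup>2)"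
      using q0 F_ge_fl[of "\<theta> (Suc t) \<omega>"] by (simp add: ennreal_plus ennreal_mult)
    also have "\<dots> = H (Y t \<omega>, Z t \<omega>)"
      unfolding H_def phi_def by (simp add: Th_Y \<theta>_Suc Z_app)
    finally show "ennreal (F (\<theta> (Suc t) \<omega>) - fl) + ennreal q * ennreal ((norm (gF (\<theta> t \<omega>)))\<^sup>2) = H (Y t \<omega>, Z t \<omega>)" .
  qed
  also have "\<dots> = (\<integral>\<^sup>+ \<omega>. (\<integral>\<^sup>+ \<omega>'. H (Y t \<omega>, Z t \<omega>') \<partial>M) \<partial>M)"
    by (rule M.indep_nn_integral[OF indepYZ Hm])
  also have "\<dots> = (\<integral>\<^sup>+ \<omega>. (\<integral>\<^sup>+ \<omega>'. ennreal (F (\<theta> t \<omega> - \<eta> t *\<^sub>R ((\<Sum>i<b t. G (X t i \<omega>') (\<theta> t \<omega>)) /\<^sub>R real (b t))) - fl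
        + \<eta> t * (1 - Lb * \<eta> t / 2) * (norm (gF (\<theta> t \<omega>)))\<^sup>2) \<partial>M) \<partial>M)"
    unfolding H_def phi_def q_def by (simp add: Th_Y Z_app)
  also have "\<dots> \<le> (\<integral>\<^sup>+ \<omega>. ennreal (F (\<theta> t \<omega>) - fl + Lb * (\<eta> t)\<^sup>2 * \<sigma>\<^sup>2 / (2 * real (b t))) \<partial>M)"
    by (intro nn_integral_mono step2)
  also have "\<dots> = FF t + ennreal (Lb * (\<eta> t)\<^sup>2 * \<sigma>\<^sup>2 / (2 * real (b t)))"
    unfolding FF_def using F_ge_fl Lb_pos
    by (simp add: ennreal_plus nn_integral_add M.emeasure_space_1)
  finally show ?thesis unfolding q_def .
qed


lemma gF_bound: "(norm (gF x))\<^sup>2 \<le> Lb\<^sup>2 * (norm (x - \<theta>s))\<^sup>2"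
proof -
  have "norm (gF x) \<le> Lb * norm (x - \<theta>s)" using lipF[of x \<theta>s] by (simp add: gF_zero)
  then have "(norm (gF x))\<^sup>2 \<le> (Lb * norm (x - \<theta>s))\<^sup>2" by (intro power_mono) auto
  then show ?thesis by (simp add: power_mult_distrib)
qed

lemma F_bound: "F x - F \<theta>s \<le> Lb / 2 * (norm (x - \<theta>s))\<^sup>2"
  using descent[OF gradF lipF, of x \<theta>s] by (simp add: gF_zero)

lemma F_bound': "F x * 2 - F \<theta>s * 2 \<le> Lb * (norm (x - \<theta>s))\<^sup>2"
  using F_bound[of x] by linarith

lemma AA_fin: "AA t < \<infinity>"
proof (induction t)
  case 0
  then show ?case by (simp add: AA_def \<theta>_0 M.emeasure_space_1)
next
  case (Suc t)
  have "NN t \<le> (\<integral>\<^sup>+ \<omega>. ennreal (Lb\<^sup>2) * ennreal ((norm (\<theta> t \<omega> - \<theta>s))\<^sup>2) \<partial>M)"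
    unfolding NN_def by (intro nn_integral_mono) (simp add: gF_bound flip: ennreal_mult)
  also have "\<dots> = ennreal (Lb\<^sup>2) * AA t" unfolding AA_def by (simp add: nn_integral_cmult)
  finally have "NN t < \<infinity>" using Suc by (simp add: ennreal_mult_less_top order.strict_trans1)
  then have "AA t + ennreal ((\<eta> t)\<^sup>2) * NN t + ennreal ((\<eta> t)\<^sup>2 * \<sigma>\<^sup>2 / real (b t)) < \<infinity>"
    using Suc by (simp add: ennreal_mult_less_top)
  moreover have "AA (Suc t) \<le> AA t + ennreal ((\<eta> t)\<^sup>2) * NN t + ennreal ((\<eta> t)\<^sup>2 * \<sigma>\<^sup>2 / real (b t))"
    using S1e[of t] by (rule order.trans[rotated]) simp
  ultimately show ?case by (rule le_less_trans[rotated])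
qed

lemma NN_fin: "NN t < \<infinity>"
proof -
  have "NN t \<le> (\<integral>\<^sup>+ \<omega>. ennreal (Lb\<^sup>2) * ennreal ((norm (\<theta> t \<omega> - \<theta>s))\<^sup>2) \<partial>M)"
    unfolding NN_def by (intro nn_integral_mono) (simp add: gF_bound flip: ennreal_mult)
  also have "\<dots> = ennreal (Lb\<^sup>2) * AA t" unfolding AA_def by (simp add: nn_integral_cmult)
  finally show ?thesis using AA_fin[of t] by (simp add: ennreal_mult_less_top order.strict_trans1)
qed

lemma DD_fin: "DD t < \<infinity>"
proof -
  have "DD t \<le> (\<integral>\<^sup>+ \<omega>. ennreal (Lb / 2) * ennreal ((norm (\<theta> t \<omega> - \<theta>s))\<^sup>2) \<partial>M)"
    unfolding DD_def using Lb_pos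
    by (intro nn_integral_mono, subst ennreal_mult[symmetric]) (auto intro!: ennreal_leI F_bound simp: F_bound')
  also have "\<dots> = ennreal (Lb / 2) * AA t" unfolding AA_def by (simp add: nn_integral_cmult)
  finally show ?thesis using AA_fin[of t] by (simp add: ennreal_mult_less_top order.strict_trans1)
qed

lemma FF_eq: "FF t = DD t + ennreal (F \<theta>s - fl)"
proof -
  have "FF t = (\<integral>\<^sup>+ \<omega>. ennreal (F (\<theta> t \<omega>) - F \<theta>s) + ennreal (F \<theta>s - fl) \<partial>M)"
    unfolding FF_def using minimizer F_ge_fl by (intro nn_integral_cong) (simp flip: ennreal_plus)
  also have "\<dots> = DD t + ennreal (F \<theta>s - fl)"
    unfolding DD_def by (simp add: nn_integral_add M.emeasure_space_1)
  finally show ?thesis .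
qed

lemma FF_fin: "FF t < \<infinity>" using DD_fin[of t] by (simp add: FF_eq)

definition "ar t = enn2real (AA t)"
definition "dr t = enn2real (DD t)"
definition "nr t = enn2real (NN t)"
definition "fr t = enn2real (FF t)"

lemma AA_r: "AA t = ennreal (ar t)" unfolding ar_def using AA_fin by simp
lemma DD_r: "DD t = ennreal (dr t)" unfolding dr_def using DD_fin by simp
lemma NN_r: "NN t = ennreal (nr t)" unfolding nr_def using NN_fin by simp
lemma FF_r: "FF t = ennreal (fr t)" unfolding fr_def using FF_fin by simp

lemma r_nonneg: "ar t \<ge> 0" "dr t \<ge> 0" "nr t \<ge> 0" "fr t \<ge> 0"
  by (simp_all add: ar_def dr_def nr_def fr_def)

lemma S1r: "ar (Suc t) + 2 * \<eta> t * dr t \<le> ar t + (\<eta> t)\<^sup>2 * nr t + (\<eta> t)\<^sup>2 * \<sigma>\<^sup>2 / real (b t)"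
proof -
  have e: "0 \<le> 2 * \<eta> t" using eta_nonneg[of t] by simp
  have "ennreal (ar (Suc t) + 2 * \<eta> t * dr t) \<le> ennreal (ar t + (\<eta> t)\<^sup>2 * nr t + (\<eta> t)\<^sup>2 * \<sigma>\<^sup>2 / real (b t))"
    using S1e[of t] e r_nonneg unfolding AA_r DD_r NN_r
    by (simp add: ennreal_plus ennreal_mult add_nonneg_nonneg mult_nonneg_nonneg)
  then show ?thesis using r_nonneg e by (subst (asm) ennreal_le_iff) (auto intro!: add_nonneg_nonneg mult_nonneg_nonneg)
qed

lemma S2r: "fr (Suc t) + \<eta> t * (1 - Lb * \<eta> t / 2) * nr t \<le> fr t + Lb * (\<eta> t)\<^sup>2 * \<sigma>\<^sup>2 / (2 * real (b t))"
proof -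
  have q0: "\<eta> t * (1 - Lb * \<eta> t / 2) \<ge> 0" using eta_nonneg[of t] Lb_eta[of t] by simp
  have c0: "Lb * (\<eta> t)\<^sup>2 * \<sigma>\<^sup>2 / (2 * real (b t)) \<ge> 0" using Lb_pos by simp
  have "ennreal (fr (Suc t) + \<eta> t * (1 - Lb * \<eta> t / 2) * nr t) \<le> ennreal (fr t + Lb * (\<eta> t)\<^sup>2 * \<sigma>\<^sup>2 / (2 * real (b t)))"
    using S2e[of t] q0 c0 r_nonneg unfolding FF_r NN_r
    by (simp add: ennreal_plus[symmetric] ennreal_mult[symmetric] del: ennreal_plus)
  then show ?thesis using r_nonneg c0 by (subst (asm) ennreal_le_iff) auto
qed


lemma main:
  shows "Min ((\<lambda>t. \<integral>\<omega>. (avg_fun n fs (\<theta> t \<omega>) - avg_fun n fs \<theta>s) \<partial>M) ` {..<T})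
    \<le> ((norm (\<theta>0 - \<theta>s))\<^sup>2 / 2
         + \<eta>max * (avg_fun n fs \<theta>0 - avg_inf n fs) / (2 - ((\<Sum>i<n. L i) / real n) * \<eta>max))
       * (1 / (\<Sum>t<T. \<eta> t))
     + \<sigma>\<^sup>2 / 2 * (1 + ((\<Sum>i<n. L i) / real n) * \<eta>max / (2 - ((\<Sum>i<n. L i) / real n) * \<eta>max))
       * ((\<Sum>t<T. (\<eta> t)\<^sup>2 / real (b t)) / (\<Sum>t<T. \<eta> t))"
proof -
  have int_eq: "(\<integral>\<omega>. (F (\<theta> t \<omega>) - F \<theta>s) \<partial>M) = dr t" for t
    unfolding dr_def DD_def by (rule integral_eq_nn_integral) (auto simp: minimizer)
  have img: "(\<lambda>t. \<integral>\<omega>. (F (\<theta> t \<omega>) - F \<theta>s) \<partial>M) ` {..<T} = dr ` {..<T}" by (simp add: int_eq)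
  have a0: "ar 0 = (norm (\<theta>0 - \<theta>s))\<^sup>2" by (simp add: ar_def AA_def \<theta>_0 M.emeasure_space_1)
  have f0: "fr 0 = F \<theta>0 - fl" using F_ge_fl[of \<theta>0] by (simp add: fr_def FF_def \<theta>_0 M.emeasure_space_1)
  have Lmax: "Lb * \<eta>max < 2" using \<eta>max_lt Lb_pos unfolding Lb_def[symmetric] by (simp add: field_simps)
  have "Min (dr ` {..<T}) \<le> (ar 0 / 2 + \<eta>max * fr 0 / (2 - Lb * \<eta>max)) * (1 / (\<Sum>t<T. \<eta> t))
     + \<sigma>\<^sup>2 / 2 * (1 + Lb * \<eta>max / (2 - Lb * \<eta>max)) * ((\<Sum>t<T. (\<eta> t)\<^sup>2 / real (b t)) / (\<Sum>t<T. \<eta> t))"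
    by (rule final_alg[OF Lb_pos Lmax _ _ r_nonneg(1) r_nonneg(3) r_nonneg(4) _ S1r S2r sum_ne])
       (use eta_nonneg \<eta>_range b_pos in auto)
  then show ?thesis unfolding img a0 f0 Lb_def .
qed

end

theorem lemma2:
  fixes n :: nat
    and fs :: "nat \<Rightarrow> 'a::euclidean_space \<Rightarrow> real"
    and gfs :: "nat \<Rightarrow> 'a \<Rightarrow> 'a"
    and L :: "nat \<Rightarrow> real"
    and D :: "'b measure"
    and G :: "'b \<Rightarrow> 'a \<Rightarrow> 'a"
    and \<sigma> :: real
    and M :: "'m measure"
    and X :: "nat \<Rightarrow> nat \<Rightarrow> 'm \<Rightarrow> 'b"
    and b :: "nat \<Rightarrow> nat"
    and \<eta> :: "nat \<Rightarrow> real"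
    and \<eta>min \<eta>max :: real
    and \<theta> :: "nat \<Rightarrow> 'm \<Rightarrow> 'a"
    and \<theta>0 \<theta>s :: 'a
    and T :: nat
  assumes n_pos: "n \<ge> 1"
    \<comment> \<open>(A1)\<close>
    and grad: "\<And>i x. i < n \<Longrightarrow> (fs i has_derivative (\<lambda>h. gfs i x \<bullet> h)) (at x)"
    and L_pos: "\<And>i. i < n \<Longrightarrow> L i > 0"
    and smooth: "\<And>i x y. i < n \<Longrightarrow> norm (gfs i x - gfs i y) \<le> L i * norm (x - y)"
    and bdd: "\<And>i. i < n \<Longrightarrow> bdd_below (range (fs i))"
    \<comment> \<open>(A2)\<close>
    and probD: "prob_space D"
    and G_meas: "(\<lambda>(\<xi>, x). G \<xi> x) \<in> borel_measurable (D \<Otimes>\<^sub>M borel)"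
    and G_int: "\<And>x. integrable D (\<lambda>\<xi>. G \<xi> x)"
    and G_unbiased: "\<And>x. (\<integral>\<xi>. G \<xi> x \<partial>D) = (\<Sum>i<n. gfs i x) /\<^sub>R real n"
    and G_var_int: "\<And>x. integrable D (\<lambda>\<xi>. (norm (G \<xi> x - (\<Sum>i<n. gfs i x) /\<^sub>R real n))\<^sup>2)"
    and G_var: "\<And>x. (\<integral>\<xi>. (norm (G \<xi> x - (\<Sum>i<n. gfs i x) /\<^sub>R real n))\<^sup>2 \<partial>D) \<le> \<sigma>\<^sup>2"
    and \<sigma>_nonneg: "\<sigma> \<ge> 0"
    \<comment> \<open>(A3) and mini-batch SGD: i.i.d. draws X t i, i < b t, all independent\<close>
    and probM: "prob_space M"
    and indep: "prob_space.indep_vars M (\<lambda>_. D) (\<lambda>(t, i). X t i) {(t, i). i < b t}"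
    and distrX: "\<And>t i. i < b t \<Longrightarrow> distr M D (X t i) = D"
    and b_pos: "\<And>t. b t \<ge> 1"
    and \<theta>_0: "\<And>\<omega>. \<theta> 0 \<omega> = \<theta>0"
    and \<theta>_Suc: "\<And>t \<omega>. \<theta> (Suc t) \<omega> =
        \<theta> t \<omega> - \<eta> t *\<^sub>R ((\<Sum>i<b t. G (X t i \<omega>) (\<theta> t \<omega>)) /\<^sub>R real (b t))"
    \<comment> \<open>learning rates\<close>
    and \<eta>min_nonneg: "0 \<le> \<eta>min"
    and \<eta>_range: "\<And>t. \<eta>min \<le> \<eta> t \<and> \<eta> t \<le> \<eta>max"
    and \<eta>max_lt: "\<eta>max < 2 / ((\<Sum>i<n. L i) / real n)"
    \<comment> \<open>convexity and minimizer\<close>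
    and convex: "convex_on UNIV (avg_fun n fs)"
    and minimizer: "\<And>x. avg_fun n fs \<theta>s \<le> avg_fun n fs x"
    and sum_ne: "(\<Sum>t<T. \<eta> t) \<noteq> 0"
  shows "Min ((\<lambda>t. \<integral>\<omega>. (avg_fun n fs (\<theta> t \<omega>) - avg_fun n fs \<theta>s) \<partial>M) ` {..<T})
    \<le> ((norm (\<theta>0 - \<theta>s))\<^sup>2 / 2
         + \<eta>max * (avg_fun n fs \<theta>0 - avg_inf n fs) / (2 - ((\<Sum>i<n. L i) / real n) * \<eta>max))
       * (1 / (\<Sum>t<T. \<eta> t))
     + \<sigma>\<^sup>2 / 2 * (1 + ((\<Sum>i<n. L i) / real n) * \<eta>max / (2 - ((\<Sum>i<n. L i) / real n) * \<eta>max))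
       * ((\<Sum>t<T. (\<eta> t)\<^sup>2 / real (b t)) / (\<Sum>t<T. \<eta> t))"
  by (rule sgd.main[OF sgd.intro[OF assms]])

end
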